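(* Let $G$ be the threshold graph given by the binary sequence $(1^{p_l},0^{z_l},1^{p_{l-1}},0^{z_{l-1}},\dots,1^{p_1},0^{z_1},1^{p_0},\star)$, where $l\ge0$, $z_1,\dots,z_l$ are positive integers and $p_0,\dots,p_l$ are nonnegative integers. Then the number of pairwise non-isomorphic transitive orientations of $G$ is $\prod_{i=1}^{l}(p_i+1)$.
   Context: A binary sequence $(s_1,\dots,s_{n-1},\star)$ with $s_i\in\{0,1\}$ determines an undirected graph read right to left: start with one vertex (for $\star$), then for $i=n-1,\dots,1$ add a vertex $v_i$ which is isolated if $s_i=0$ and adjacent to all previously added vertices if $s_i=1$; $x^k$ denotes $k$ consecutive copies of $x$. Graphs arising this way are exactly the threshold graphs. A transitive orientation of $G$ is an assignment of a direction to each edge such that $x\to y$, $y\to z$ imply $x\to z$; two orientations are isomorphic if there is a digraph isomorphism between them. *)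

theory Defs
  imports Main
begin

text \<open>A binary sequence (s_1,...,s_{n-1},star) is represented by the list
  s = [s_1,...,s_{n-1}] of booleans (True = 1, False = 0). The vertices are
  0,...,n-1 where vertex k < n-1 is v_{k+1} and vertex n-1 is the star vertex.
  Reading right to left, v_i is joined to all v_j with j > i iff s_i = 1.\<close>

definition thr_vertices :: "bool list \<Rightarrow> nat set" where
  "thr_vertices s = {..<Suc (length s)}"

definition thr_adj :: "bool list \<Rightarrow> nat \<Rightarrow> nat \<Rightarrow> bool" where
  "thr_adj s a b \<longleftrightarrow> a \<noteq> b \<and> a \<in> thr_vertices s \<and> b \<in> thr_vertices s \<and> s ! (min a b)"

fun blocks :: "nat \<Rightarrow> (nat \<Rightarrow> nat) \<Rightarrow> (nat \<Rightarrow> nat) \<Rightarrow> bool list" where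
  "blocks 0 p z = replicate (p 0) True"
| "blocks (Suc i) p z = replicate (p (Suc i)) True @ replicate (z (Suc i)) False @ blocks i p z"

definition transitive_orientation :: "'a set \<Rightarrow> ('a \<Rightarrow> 'a \<Rightarrow> bool) \<Rightarrow> ('a \<times> 'a) set \<Rightarrow> bool" where
  "transitive_orientation V E R \<longleftrightarrow>
     (\<forall>(x,y)\<in>R. x \<in> V \<and> y \<in> V \<and> E x y) \<and>
     (\<forall>x\<in>V. \<forall>y\<in>V. E x y \<longrightarrow> ((x,y) \<in> R \<longleftrightarrow> (y,x) \<notin> R)) \<and>
     trans R"

definition digraph_iso :: "'a set \<Rightarrow> ('a \<times> 'a) set \<Rightarrow> ('a \<times> 'a) set \<Rightarrow> bool" where
  "digraph_iso V R1 R2 \<longleftrightarrow>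
     (\<exists>f. bij_betw f V V \<and> (\<forall>x\<in>V. \<forall>y\<in>V. (x,y) \<in> R1 \<longleftrightarrow> (f x, f y) \<in> R2))"

definition trans_orients :: "'a set \<Rightarrow> ('a \<Rightarrow> 'a \<Rightarrow> bool) \<Rightarrow> ('a \<times> 'a) set set" where
  "trans_orients V E = {R. transitive_orientation V E R}"

definition num_noniso_TO :: "'a set \<Rightarrow> ('a \<Rightarrow> 'a \<Rightarrow> bool) \<Rightarrow> nat" where
  "num_noniso_TO V E =
     card (trans_orients V E // {(R1,R2). R1 \<in> trans_orients V E \<and> R2 \<in> trans_orients V E \<and> digraph_iso V R1 R2})"

end

theory Submission
  imports Defs "HOL-Library.FuncSet"
begin


locale tg =
  fixes V :: "nat set" and rho :: "nat \<Rightarrow> nat" and st :: nat and l :: nat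
    and E :: "nat \<Rightarrow> nat \<Rightarrow> bool"
  assumes finV: "finite V" and stV: "st \<in> V" and rho_st: "rho st = 0"
    and rho0: "\<And>v. v \<in> V \<Longrightarrow> rho v = 0 \<Longrightarrow> v = st"
    and rho_le: "\<And>v. v \<in> V \<Longrightarrow> rho v \<le> 2*l+1"
    and zex: "\<And>j. 1 \<le> j \<Longrightarrow> j \<le> l \<Longrightarrow> \<exists>z\<in>V. rho z = 2*j"
    and E_def: "\<And>a b. E a b \<longleftrightarrow> a \<noteq> b \<and> a \<in> V \<and> b \<in> V \<and> odd (max (rho a) (rho b))"
begin

definition "Cs = {v\<in>V. odd (rho v) \<or> v = st}"
definition "lvl v = rho v div 2"
definition "key R c = (if (c,st)\<in>R then - int (lvl c) else int (lvl c))"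
definition "rank R c = card {d\<in>Cs. (d,c)\<in>R}"
definition "TO R \<longleftrightarrow> transitive_orientation V E R"

lemma TO_in: "TO R \<Longrightarrow> (x,y)\<in>R \<Longrightarrow> x \<in> V \<and> y \<in> V \<and> E x y"
  unfolding TO_def transitive_orientation_def by blast

lemma TO_E: "TO R \<Longrightarrow> E x y \<Longrightarrow> (x,y)\<in>R \<longleftrightarrow> (y,x)\<notin>R"
  unfolding TO_def transitive_orientation_def using E_def by blast

lemma TO_trans: "TO R \<Longrightarrow> (x,y)\<in>R \<Longrightarrow> (y,z)\<in>R \<Longrightarrow> (x,z)\<in>R"
  unfolding TO_def transitive_orientation_def trans_def by blast

lemma E_sym: "E a b \<Longrightarrow> E b a" using E_def by (auto simp: max.commute)

lemma factA:
  assumes "TO R" "c \<in> V" "odd (rho c)" "w \<in> V" "even (rho w)" "rho w < rho c"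
  shows "(c,w)\<in>R \<longleftrightarrow> (c,st)\<in>R"
proof -
  have Ew: "E c w" using assms E_def by auto
  have Es: "E c st" using assms E_def stV rho_st by (auto simp: max_def)
  have nE: "\<not> E w st" using E_def rho_st assms by auto
  show ?thesis
  proof
    assume cw: "(c,w)\<in>R"
    show "(c,st)\<in>R"
    proof (rule ccontr)
      assume "(c,st)\<notin>R"
      then have "(st,c)\<in>R" using TO_E[OF assms(1) Es] by blast
      then have "(st,w)\<in>R" using TO_trans[OF assms(1) _ cw] by blast
      then show False using TO_in[OF assms(1)] nE E_sym by blast
    qed
  next
    assume cs: "(c,st)\<in>R"
    show "(c,w)\<in>R"
    proof (rule ccontr)
      assume "(c,w)\<notin>R"
      then have "(w,c)\<in>R" using TO_E[OF assms(1) Ew] by blast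
      then have "(w,st)\<in>R" using TO_trans[OF assms(1) _ cs] by blast
      then show False using TO_in[OF assms(1)] nE by blast
    qed
  qed
qed

lemma C_E: "c \<in> Cs \<Longrightarrow> d \<in> Cs \<Longrightarrow> c \<noteq> d \<Longrightarrow> E c d"
  unfolding Cs_def E_def using rho_st by (auto simp: max_def)

lemma key_st: "TO R \<Longrightarrow> key R st = 0"
  unfolding key_def lvl_def using TO_in E_def rho_st by auto

lemma lvl_le: "v \<in> V \<Longrightarrow> lvl v \<le> l" using rho_le unfolding lvl_def by fastforce

lemma order_lemma:
  assumes R: "TO R" and c: "c \<in> Cs" and d: "d \<in> Cs" and k: "key R c < key R d"
  shows "(c,d)\<in>R"
proof -
  have cd: "c \<noteq> d" using k by auto
  have Ecd: "E c d" using C_E[OF c d cd] .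
  have cV: "c \<in> V" and dV: "d \<in> V" using c d Cs_def by auto
  consider (BB) "(c,st)\<in>R" "(d,st)\<in>R" | (BN) "(c,st)\<in>R" "(d,st)\<notin>R"
    | (NN) "(c,st)\<notin>R" "(d,st)\<notin>R" | (NB) "(c,st)\<notin>R" "(d,st)\<in>R" by blast
  then show ?thesis
  proof cases
    case BN
    show ?thesis
    proof (cases "d = st")
      case True then show ?thesis using BN by simp
    next
      case False
      show ?thesis
      proof (rule ccontr)
        assume "(c,d)\<notin>R"
        then have "(d,c)\<in>R" using TO_E[OF R Ecd] by blast
        then have "(d,st)\<in>R" using TO_trans[OF R _ BN(1)] by blast
        then show False using BN by blast
      qed
    qed
  next
    case NB then show ?thesis using k unfolding key_def by auto
  next
    case BB
    have lt: "lvl d < lvl c" using k BB unfolding key_def by auto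
    have cnst: "c \<noteq> st" using BB TO_in[OF R] E_def by auto
    have dnst: "d \<noteq> st" using BB TO_in[OF R] E_def by auto
    have oc: "odd (rho c)" and od: "odd (rho d)" using c d cnst dnst Cs_def by auto
    obtain w where w: "w \<in> V" "rho w = 2 * lvl c"
      using zex[of "lvl c"] lt lvl_le[OF cV] by auto
    have rc: "rho c = 2 * lvl c + 1" using oc unfolding lvl_def by presburger
    have rd: "rho d = 2 * lvl d + 1" using od unfolding lvl_def by presburger
    have cw: "(c,w)\<in>R" using factA[OF R cV oc w(1)] w rc BB by auto
    have nE: "\<not> E d w" using E_def w rd lt by (auto simp: max_def)
    show ?thesis
    proof (rule ccontr)
      assume "(c,d)\<notin>R"
      then have "(d,c)\<in>R" using TO_E[OF R Ecd] by blast
      then have "(d,w)\<in>R" using TO_trans[OF R _ cw] by blast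
      then show False using TO_in[OF R] nE by blast
    qed
  next
    case NN
    have lt: "lvl c < lvl d" using k NN unfolding key_def by auto
    have dnst: "d \<noteq> st" using lt rho_st unfolding lvl_def by auto
    have od: "odd (rho d)" using d dnst Cs_def by auto
    obtain w where w: "w \<in> V" "rho w = 2 * lvl d"
      using zex[of "lvl d"] lt lvl_le[OF dV] by auto
    have rd: "rho d = 2 * lvl d + 1" using od unfolding lvl_def by presburger
    have rc: "rho c \<le> 2 * lvl c + 1" unfolding lvl_def by presburger
    have wd: "(w,d)\<in>R"
    proof -
      have "(d,w)\<notin>R" using factA[OF R dV od w(1)] w rd NN by auto
      moreover have "E d w" using E_def w rd dV by (auto simp: max_def)
      ultimately show ?thesis using TO_E[OF R] by blast
    qed
    have nE: "\<not> E w c" using E_def w rc lt by (auto simp: max_def)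
    show ?thesis
    proof (rule ccontr)
      assume "(c,d)\<notin>R"
      then have "(d,c)\<in>R" using TO_E[OF R Ecd] by blast
      then have "(w,c)\<in>R" using TO_trans[OF R wd] by blast
      then show False using TO_in[OF R] nE by blast
    qed
  qed
qed

end


context tg begin

lemma finC: "finite Cs" using finV unfolding Cs_def by auto

lemma rank_less:
  assumes R: "TO R" and c: "c \<in> Cs" and d: "d \<in> Cs" and cd: "(c,d)\<in>R"
  shows "rank R c < rank R d"
proof -
  have "{e\<in>Cs. (e,c)\<in>R} \<subset> {e\<in>Cs. (e,d)\<in>R}"
  proof -
    have "{e\<in>Cs. (e,c)\<in>R} \<subseteq> {e\<in>Cs. (e,d)\<in>R}" using TO_trans[OF R _ cd] by blast
    moreover have "c \<in> {e\<in>Cs. (e,d)\<in>R}" using c cd by auto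
    moreover have "c \<notin> {e\<in>Cs. (e,c)\<in>R}" using TO_in[OF R] E_def by auto
    ultimately show ?thesis by blast
  qed
  then show ?thesis unfolding rank_def by (intro psubset_card_mono) (auto intro: finite_subset[OF _ finC])
qed

lemma rank_iff:
  assumes R: "TO R" and c: "c \<in> Cs" and d: "d \<in> Cs"
  shows "(c,d)\<in>R \<longleftrightarrow> rank R c < rank R d"
proof
  assume "(c,d)\<in>R" then show "rank R c < rank R d" using rank_less[OF R c d] by blast
next
  assume lt: "rank R c < rank R d"
  show "(c,d)\<in>R"
  proof (rule ccontr)
    assume n: "(c,d)\<notin>R"
    have "c \<noteq> d" using lt by auto
    then have "(d,c)\<in>R" using n TO_E[OF R C_E[OF c d]] by blast
    then show False using rank_less[OF R d c] lt by auto
  qed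
qed

lemma rank_inj: "TO R \<Longrightarrow> inj_on (rank R) Cs"
  unfolding inj_on_def
proof (intro ballI impI)
  fix x y assume R: "TO R" and x: "x\<in>Cs" and y: "y \<in> Cs" and e: "rank R x = rank R y"
  show "x = y"
  proof (rule ccontr)
    assume "x \<noteq> y"
    then have "(x,y)\<in>R \<or> (y,x)\<in>R" using TO_E[OF R C_E[OF x y]] by blast
    then show False using rank_less[OF R x y] rank_less[OF R y x] e by auto
  qed
qed

lemma rank_bound: assumes R: "TO R" and c: "c \<in> Cs" shows "rank R c < card Cs"
proof -
  have "c \<notin> {e\<in>Cs. (e,c)\<in>R}" using TO_in[OF R] E_def by auto
  then have "{e\<in>Cs. (e,c)\<in>R} \<subset> Cs" using c by blast
  then show ?thesis unfolding rank_def using finC psubset_card_mono by blast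
qed

lemma rank_bij: assumes R: "TO R" shows "bij_betw (rank R) Cs {..<card Cs}"
proof -
  have "rank R ` Cs \<subseteq> {..<card Cs}" using rank_bound[OF R] by auto
  moreover have "card (rank R ` Cs) = card {..<card Cs}" using card_image[OF rank_inj[OF R]] by simp
  ultimately have "rank R ` Cs = {..<card Cs}" by (intro card_subset_eq) auto
  then show ?thesis using rank_inj[OF R] unfolding bij_betw_def by blast
qed

definition "K R k = card {d\<in>Cs. key R d \<le> k}"

lemma rank_lower: assumes R: "TO R" and c: "c \<in> Cs" shows "K R (key R c - 1) \<le> rank R c"
proof -
  have "{d\<in>Cs. key R d \<le> key R c - 1} \<subseteq> {d\<in>Cs. (d,c)\<in>R}"
    using order_lemma[OF R _ c] by auto
  then show ?thesis unfolding K_def rank_def by (intro card_mono) (auto intro: finite_subset[OF _ finC])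
qed

lemma rank_upper: assumes R: "TO R" and c: "c \<in> Cs" shows "rank R c < K R (key R c)"
proof -
  have "{d\<in>Cs. (d,c)\<in>R} \<subset> {d\<in>Cs. key R d \<le> key R c}"
  proof -
    have "{d\<in>Cs. (d,c)\<in>R} \<subseteq> {d\<in>Cs. key R d \<le> key R c}"
    proof safe
      fix d assume d: "d \<in> Cs" "(d,c)\<in>R"
      show "key R d \<le> key R c"
      proof (rule ccontr)
        assume "\<not> key R d \<le> key R c"
        then have "(c,d)\<in>R" using order_lemma[OF R c d(1)] by auto
        then show False using d TO_E[OF R] TO_in[OF R] by blast
      qed
    qed
    moreover have "c \<notin> {d\<in>Cs. (d,c)\<in>R}" using TO_in[OF R] E_def by auto
    moreover have "c \<in> {d\<in>Cs. key R d \<le> key R c}" using c by auto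
    ultimately show ?thesis by blast
  qed
  then show ?thesis unfolding K_def rank_def using finC
    by (intro psubset_card_mono) (auto intro: finite_subset[OF _ finC])
qed

lemma K_mono: "k \<le> k' \<Longrightarrow> K R k \<le> K R k'"
  unfolding K_def by (intro card_mono) (auto intro: finite_subset[OF _ finC])

lemma key_eq_from_rank:
  assumes R1: "TO R1" and R2: "TO R2" and KK: "\<And>k. K R1 k = K R2 k"
    and c: "c \<in> Cs" and c': "c' \<in> Cs" and rr: "rank R2 c' = rank R1 c"
  shows "key R2 c' = key R1 c"
proof (rule ccontr)
  assume ne: "key R2 c' \<noteq> key R1 c"
  note a = rank_lower[OF R1 c] rank_upper[OF R1 c] rank_lower[OF R2 c'] rank_upper[OF R2 c']
  show False
  proof (cases "key R2 c' < key R1 c")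
    case True
    then have "K R1 (key R2 c') \<le> K R1 (key R1 c - 1)" by (intro K_mono) auto
    then show False using a KK rr by (metis leD le_less_trans)
  next
    case False
    then have "K R2 (key R1 c) \<le> K R2 (key R2 c' - 1)" using ne by (intro K_mono) auto
    then show False using a KK rr by (metis leD le_less_trans)
  qed
qed

end


context tg begin

lemma outside_C: assumes w: "w \<in> V" "w \<notin> Cs" shows "even (rho w)" "rho w = 2 * lvl w" "lvl w \<ge> 1" "w \<noteq> st"
proof -
  show e: "even (rho w)" using w unfolding Cs_def by blast
  show ns: "w \<noteq> st" using w stV unfolding Cs_def by blast
  have "rho w \<noteq> 0" using rho0 w(1) ns by blast
  moreover have "rho w = 2 * (rho w div 2)" using e by simp
  ultimately show "rho w = 2 * lvl w" "lvl w \<ge> 1" unfolding lvl_def by linarith+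
qed

lemma in_C: assumes c: "c \<in> Cs" shows "rho c = (if c = st then 0 else 2 * lvl c + 1)"
proof (cases "c = st")
  case True then show ?thesis using rho_st by simp
next
  case False
  then have "odd (rho c)" using c unfolding Cs_def by blast
  then show ?thesis using False unfolding lvl_def by (simp add: odd_two_times_div_two_succ)
qed

lemma edge_CW:
  assumes R: "TO R" and c: "c \<in> Cs" and w: "w \<in> V" "w \<notin> Cs"
  shows "(c,w)\<in>R \<longleftrightarrow> key R c \<le> - int (lvl w)"
proof -
  note ow = outside_C[OF w]
  have cV: "c \<in> V" using c Cs_def by auto
  show ?thesis
  proof
    assume cw: "(c,w)\<in>R"
    then have "E c w" using TO_in[OF R] by blast
    then have cst: "c \<noteq> st" and oc: "odd (rho c)" and lt: "rho w < rho c"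
      using E_def ow rho_st in_C[OF c] by (auto simp: max_def split: if_splits)
    have "(c,st)\<in>R" using factA[OF R cV oc w(1) ow(1) lt] cw by blast
    then show "key R c \<le> - int (lvl w)" using lt ow in_C[OF c] cst unfolding key_def by auto
  next
    assume k: "key R c \<le> - int (lvl w)"
    then have B: "(c,st)\<in>R" using ow unfolding key_def by (auto split: if_splits)
    then have lw: "lvl w \<le> lvl c" using k unfolding key_def by auto
    then have cst: "c \<noteq> st" using ow rho_st unfolding lvl_def by auto
    then have oc: "odd (rho c)" and lt: "rho w < rho c" using in_C[OF c] ow lw by auto
    show "(c,w)\<in>R" using factA[OF R cV oc w(1) ow(1) lt] B by blast
  qed
qed

lemma edge_WC:
  assumes R: "TO R" and c: "c \<in> Cs" and w: "w \<in> V" "w \<notin> Cs"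
  shows "(w,c)\<in>R \<longleftrightarrow> key R c \<ge> int (lvl w)"
proof -
  note ow = outside_C[OF w]
  have cV: "c \<in> V" using c Cs_def by auto
  have lst: "lvl st = 0" using rho_st lvl_def by simp
  have EE: "E c w \<longleftrightarrow> lvl w \<le> lvl c" using E_def ow in_C[OF c] cV w rho_st lst
    by (auto simp: max_def split: if_splits)
  have "(w,c)\<in>R \<longleftrightarrow> E c w \<and> (c,w)\<notin>R" using TO_E[OF R] TO_in[OF R] E_sym by blast
  also have "\<dots> \<longleftrightarrow> lvl w \<le> lvl c \<and> \<not> key R c \<le> - int (lvl w)" using EE edge_CW[OF R c w] by blast
  also have "\<dots> \<longleftrightarrow> key R c \<ge> int (lvl w)" using ow unfolding key_def by auto
  finally show ?thesis .
qed

lemma iso_from_K: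
  assumes R1: "TO R1" and R2: "TO R2" and KK: "\<And>k. K R1 k = K R2 k"
  shows "digraph_iso V R1 R2"
proof -
  define f where "f x = (if x \<in> Cs then inv_into Cs (rank R2) (rank R1 x) else x)" for x
  have fC: "f c \<in> Cs" and fr: "rank R2 (f c) = rank R1 c" if c: "c \<in> Cs" for c
  proof -
    have "rank R1 c \<in> rank R2 ` Cs"
      using rank_bij[OF R1] rank_bij[OF R2] c unfolding bij_betw_def by auto
    then show "f c \<in> Cs" "rank R2 (f c) = rank R1 c" using c unfolding f_def
      by (auto simp: inv_into_into f_inv_into_f)
  qed
  have fk: "key R2 (f c) = key R1 c" if c: "c \<in> Cs" for c
    using key_eq_from_rank[OF R1 R2 KK c fC[OF c] fr[OF c]] .
  have CV: "Cs \<subseteq> V" using Cs_def by auto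
  have inj: "inj_on f V"
  proof (rule inj_onI)
    fix x y assume x: "x \<in> V" and y: "y \<in> V" and e: "f x = f y"
    show "x = y"
    proof (cases "x \<in> Cs"; cases "y \<in> Cs")
      assume "x \<in> Cs" "y \<in> Cs"
      then show ?thesis using fr e rank_inj[OF R1] unfolding inj_on_def by metis
    next
      assume "x \<in> Cs" "y \<notin> Cs" then show ?thesis using fC e f_def by metis
    next
      assume "x \<notin> Cs" "y \<in> Cs" then show ?thesis using fC e f_def by metis
    next
      assume "x \<notin> Cs" "y \<notin> Cs" then show ?thesis using e f_def by simp
    qed
  qed
  have img: "f ` V \<subseteq> V" using fC CV f_def by auto
  have bij: "bij_betw f V V" using endo_inj_surj[OF finV img inj] inj unfolding bij_betw_def by blast
  have pres: "(x,y)\<in>R1 \<longleftrightarrow> (f x, f y)\<in>R2" if x: "x \<in> V" and y: "y \<in> V" for x y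
  proof (cases "x \<in> Cs"; cases "y \<in> Cs")
    assume a: "x \<in> Cs" "y \<in> Cs"
    then show ?thesis using rank_iff[OF R1 a] rank_iff[OF R2 fC fC] fr by simp
  next
    assume a: "x \<in> Cs" "y \<notin> Cs"
    then show ?thesis using edge_CW[OF R1 a(1) y a(2)] edge_CW[OF R2 fC[OF a(1)] y a(2)] fk f_def by simp
  next
    assume a: "x \<notin> Cs" "y \<in> Cs"
    then show ?thesis using edge_WC[OF R1 a(2) x a(1)] edge_WC[OF R2 fC[OF a(2)] x a(1)] fk f_def by simp
  next
    assume a: "x \<notin> Cs" "y \<notin> Cs"
    have "\<not> E x y" using outside_C[OF x a(1)] outside_C[OF y a(2)] E_def by (auto simp: max_def)
    then show ?thesis using a f_def TO_in[OF R1] TO_in[OF R2] by auto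
  qed
  show ?thesis unfolding digraph_iso_def using bij pres by blast
qed

end


context tg begin

definition "Inv R = (\<lambda>j. if j \<in> {1..l} then card {c\<in>V. rho c = 2*j+1 \<and> (c,st)\<in>R} else undefined)"
definition "N R k = card {d\<in>Cs. key R d = k}"

lemma key_neg_iff: assumes R: "TO R" and k: "k < 0"
  shows "(d \<in> Cs \<and> key R d = k) \<longleftrightarrow> (d\<in>V \<and> rho d = 2 * nat (-k) + 1 \<and> (d,st)\<in>R)"
proof
  assume d: "d \<in> Cs \<and> key R d = k"
  then have B: "(d,st)\<in>R" and lv: "lvl d = nat (-k)" using k unfolding key_def by (auto split: if_splits)
  then have "d \<noteq> st" using k rho_st lvl_def by auto
  then have "rho d = 2 * nat (-k) + 1" using in_C d lv by simp
  moreover have "d \<in> V" using d Cs_def by auto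
  ultimately show "d\<in>V \<and> rho d = 2 * nat (-k) + 1 \<and> (d,st)\<in>R" using B by blast
next
  assume d: "d\<in>V \<and> rho d = 2 * nat (-k) + 1 \<and> (d,st)\<in>R"
  then have "d \<in> Cs" unfolding Cs_def by auto
  moreover have "lvl d = nat (-k)" using d unfolding lvl_def by simp
  ultimately show "d \<in> Cs \<and> key R d = k" using d k unfolding key_def by simp
qed

lemma set_neg: assumes R: "TO R" and k: "k < 0"
  shows "{d\<in>Cs. key R d = k} = {d\<in>V. rho d = 2 * nat (-k) + 1 \<and> (d,st)\<in>R}"
  using key_neg_iff[OF R k] by blast

lemma key_pos_iff: assumes R: "TO R" and k: "k > 0"
  shows "(d \<in> Cs \<and> key R d = k) \<longleftrightarrow> (d\<in>V \<and> rho d = 2 * nat k + 1 \<and> (d,st)\<notin>R)"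
proof
  assume d: "d \<in> Cs \<and> key R d = k"
  then have B: "(d,st)\<notin>R" and lv: "lvl d = nat k" using k unfolding key_def by (auto split: if_splits)
  then have "d \<noteq> st" using k rho_st lvl_def by auto
  then have "rho d = 2 * nat k + 1" using in_C d lv by simp
  moreover have "d \<in> V" using d Cs_def by auto
  ultimately show "d\<in>V \<and> rho d = 2 * nat k + 1 \<and> (d,st)\<notin>R" using B by blast
next
  assume d: "d\<in>V \<and> rho d = 2 * nat k + 1 \<and> (d,st)\<notin>R"
  then have "d \<in> Cs" unfolding Cs_def by auto
  moreover have "lvl d = nat k" using d unfolding lvl_def by simp
  ultimately show "d \<in> Cs \<and> key R d = k" using d k unfolding key_def by simp
qed

lemma set_pos: assumes R: "TO R" and k: "k > 0"
  shows "{d\<in>Cs. key R d = k} = {d\<in>V. rho d = 2 * nat k + 1} - {d\<in>V. rho d = 2 * nat k + 1 \<and> (d,st)\<in>R}"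
  using key_pos_iff[OF R k] by blast

lemma set_zero: "{d\<in>Cs. key R d = 0} = {d\<in>Cs. lvl d = 0}"
  unfolding key_def by auto

lemma card_B: assumes "TO R" and j1: "1 \<le> j"
  shows "card {d\<in>V. rho d = 2 * j + 1 \<and> (d,st)\<in>R} = (if 1 \<le> j \<and> j \<le> l then Inv R j else 0)"
proof (cases "1 \<le> j \<and> j \<le> l")
  case True then show ?thesis unfolding Inv_def by simp
next
  case False
  have "{d\<in>V. rho d = 2 * j + 1 \<and> (d,st)\<in>R} = {}"
  proof -
    { fix d assume d: "d \<in> V" "rho d = 2 * j + 1" "(d,st)\<in>R"
      have "j \<noteq> 0" using j1 by simp
      moreover have "j \<le> l" using rho_le[OF d(1)] d(2) by simp
      ultimately have False using False by simp }
    then show ?thesis by blast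
  qed
  then show ?thesis unfolding Inv_def using False j1 by (simp only: card.empty) simp
qed

lemma N_eq: assumes R1: "TO R1" and R2: "TO R2" and I: "Inv R1 = Inv R2" shows "N R1 k = N R2 k"
proof -
  consider "k < 0" | "k = 0" | "k > 0" by linarith
  then show ?thesis
  proof cases
    case 1
    have j1: "1 \<le> nat (-k)" using 1 by simp
    show ?thesis unfolding N_def using set_neg[OF R1 1] set_neg[OF R2 1] card_B[OF R1 j1] card_B[OF R2 j1] I by simp
  next
    case 2 then show ?thesis unfolding N_def using set_zero by simp
  next
    case 3
    have f: "finite {d\<in>V. rho d = 2 * nat k + 1}" using finV by auto
    have e: "card {d\<in>V. rho d = 2*nat k+1 \<and> (d,st)\<in>R1} = card {d\<in>V. rho d = 2*nat k+1 \<and> (d,st)\<in>R2}"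
      using card_B[OF R1, of "nat k"] card_B[OF R2, of "nat k"] I 3 by simp
    have s1: "{d\<in>V. rho d = 2*nat k+1 \<and> (d,st)\<in>R} \<subseteq> {d\<in>V. rho d = 2 * nat k + 1}" for R by auto
    show ?thesis unfolding N_def set_pos[OF R1 3] set_pos[OF R2 3]
      using card_Diff_subset[OF finite_subset[OF s1 f] s1] e by simp
  qed
qed

lemma key_ge: "d \<in> Cs \<Longrightarrow> key R d \<ge> - int l"
  using lvl_le unfolding key_def Cs_def by (auto split: if_splits)

lemma K_sum: "K R k = (\<Sum>j\<in>{- int l..k}. N R j)"
proof -
  have "{d\<in>Cs. key R d \<le> k} = (\<Union>j\<in>{- int l..k}. {d\<in>Cs. key R d = j})"
    using key_ge by fastforce
  then have "K R k = card (\<Union>j\<in>{- int l..k}. {d\<in>Cs. key R d = j})" unfolding K_def by simp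
  also have "\<dots> = (\<Sum>j\<in>{- int l..k}. card {d\<in>Cs. key R d = j})"
    by (rule card_UN_disjoint) (auto intro: finite_subset[OF _ finC])
  finally show ?thesis unfolding N_def .
qed

lemma K_eq: assumes "TO R1" "TO R2" "Inv R1 = Inv R2" shows "K R1 k = K R2 k"
  unfolding K_sum by (rule sum.cong[OF refl], rule N_eq[OF assms])

definition "Nb v = {u\<in>V. E v u}"
definition "In (R :: (nat \<times> nat) set) v = {u\<in>V. (u,v)\<in>R}"

lemma Nb_zero: "w \<in> V \<Longrightarrow> even (rho w) \<Longrightarrow> Nb w = {u\<in>V. odd (rho u) \<and> rho w < rho u}"
  unfolding Nb_def E_def by (auto simp: max_def) (metis le_neq_implies_less)

lemma In_zero: assumes R: "TO R" and w: "w \<in> V" "even (rho w)"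
  shows "In R w = {u \<in> Nb w. (u,st)\<in>R}"
proof -
  { fix u assume u: "u \<in> Nb w"
    then have uV: "u \<in> V" "odd (rho u)" "rho w < rho u" using Nb_zero[OF w] by auto
    have "(u,w)\<in>R \<longleftrightarrow> (u,st)\<in>R" using factA[OF R uV(1,2) w uV(3)] . }
  moreover have "(u,w)\<in>R \<Longrightarrow> u \<in> Nb w" for u using TO_in[OF R] E_sym unfolding Nb_def by blast
  ultimately show ?thesis unfolding In_def Nb_def by blast
qed

lemma deg_class:
  assumes w: "w \<in> V" "even (rho w)" "rho w \<ge> 2" and w': "w' \<in> V" and cd: "card (Nb w') = card (Nb w)"
  shows "even (rho w') \<and> Nb w' = Nb w"
proof -
  define Od where "Od = {v\<in>V. odd (rho v)}"
  have fOd: "finite Od" using finV Od_def by auto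
  have NwO: "Nb w \<subseteq> Od" using Nb_zero[OF w(1,2)] Od_def by auto
  have ev: "even (rho w')"
  proof (rule ccontr)
    assume o: "\<not> even (rho w')"
    have pw: "rho w' > 0" using o by presburger
    have sub1: "insert st (Od - {w'}) \<subseteq> Nb w'"
      using o w' stV rho_st pw unfolding Nb_def E_def Od_def by (auto simp: max_def)
    have stO: "st \<notin> Od" using rho_st Od_def by auto
    have w'Od: "w' \<in> Od" using o w' Od_def by auto
    have c1: "card (insert st (Od - {w'})) = card Od"
      using stO w'Od fOd by (simp add: card_insert_if card_Diff_singleton_if) (metis One_nat_def Suc_pred card_gt_0_iff empty_iff)
    have fN: "finite (Nb w')" using finV unfolding Nb_def by auto
    have ge: "card Od \<le> card (Nb w')" using card_mono[OF fN sub1] c1 by simp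
    show False
    proof (cases "rho w' \<ge> 3")
      case True
      have l1: "1 \<le> l" using rho_le[OF w(1)] w(3) w(2) by presburger
      obtain z where z: "z \<in> V" "rho z = 2" using zex[of 1] l1 by auto
      have "insert z (insert st (Od - {w'})) \<subseteq> Nb w'"
        using sub1 z True w' o unfolding Nb_def E_def by (auto simp: max_def)
      moreover have "z \<notin> insert st (Od - {w'})" using z rho_st Od_def by auto
      ultimately have "Suc (card Od) \<le> card (Nb w')"
        using card_mono[OF fN] c1 fOd by (metis card_insert_disjoint finite_Diff finite_insert)
      moreover have "card (Nb w) \<le> card Od" using card_mono[OF fOd NwO] .
      ultimately show False using cd by simp
    next
      case False
      then have "rho w' = 1" using o by presburger
      then have "Nb w \<subseteq> Od - {w'}" using NwO Nb_zero[OF w(1,2)] w(3) by auto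
      then have "card (Nb w) < card Od" using fOd w'Od
        by (metis card_Diff1_less card_mono finite_Diff le_less_trans)
      then show False using ge cd by simp
    qed
  qed
  have fN: "finite (Nb w)" "finite (Nb w')" using finV unfolding Nb_def by auto
  have "Nb w' = Nb w"
  proof (cases "rho w \<le> rho w'")
    case True
    then have "Nb w' \<subseteq> Nb w" using Nb_zero[OF w(1,2)] Nb_zero[OF w' ev] by auto
    then show ?thesis using card_subset_eq[OF fN(1)] cd by blast
  next
    case False
    then have "Nb w \<subseteq> Nb w'" using Nb_zero[OF w(1,2)] Nb_zero[OF w' ev] by auto
    then show ?thesis using card_subset_eq[OF fN(2)] cd by metis
  qed
  then show ?thesis using ev by blast
qed

lemma TO_EV: assumes R: "TO R" shows "E x y \<longleftrightarrow> (x,y)\<in>R \<or> (y,x)\<in>R"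
proof
  assume "E x y" then show "(x,y)\<in>R \<or> (y,x)\<in>R" using TO_E[OF R] by blast
next
  assume "(x,y)\<in>R \<or> (y,x)\<in>R" then show "E x y" using TO_in[OF R] E_sym by blast
qed

lemma iso_In:
  assumes R1: "TO R1" and R2: "TO R2" and iso: "digraph_iso V R1 R2"
    and w: "w \<in> V" "even (rho w)" "rho w \<ge> 2"
  shows "card (In R1 w) = card (In R2 w)"
proof -
  obtain f where bij: "bij_betw f V V" and pres: "\<And>x y. x\<in>V \<Longrightarrow> y\<in>V \<Longrightarrow> (x,y)\<in>R1 \<longleftrightarrow> (f x, f y)\<in>R2"
    using iso unfolding digraph_iso_def by blast
  have inj: "inj_on f V" and sur: "f ` V = V" using bij unfolding bij_betw_def by auto
  have fV: "x \<in> V \<Longrightarrow> f x \<in> V" for x using sur by blast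
  note EV = TO_EV
  have Ef: "E x y \<longleftrightarrow> E (f x) (f y)" if x: "x \<in> V" and y: "y \<in> V" for x y
  proof -
    have "E x y \<longleftrightarrow> (x,y)\<in>R1 \<or> (y,x)\<in>R1" using EV[OF R1] .
    also have "\<dots> \<longleftrightarrow> (f x,f y)\<in>R2 \<or> (f y,f x)\<in>R2" using pres[OF x y] pres[OF y x] by simp
    also have "\<dots> \<longleftrightarrow> E (f x) (f y)" using EV[OF R2] by simp
    finally show ?thesis .
  qed
  have fwV: "f w \<in> V" using fV w(1) .
  have "Nb (f w) = f ` Nb w"
  proof
    show "f ` Nb w \<subseteq> Nb (f w)"
    proof
      fix u assume "u \<in> f ` Nb w"
      then obtain u' where u': "u' \<in> V" "E w u'" "u = f u'" unfolding Nb_def by blast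
      then show "u \<in> Nb (f w)" using Ef[OF w(1) u'(1)] fV[OF u'(1)] unfolding Nb_def by simp
    qed
    show "Nb (f w) \<subseteq> f ` Nb w"
    proof
      fix u assume u: "u \<in> Nb (f w)"
      then have uV: "u \<in> V" unfolding Nb_def by simp
      then obtain u' where u': "u' \<in> V" "u = f u'" using sur by (metis imageE)
      then have "E w u'" using u Ef[OF w(1) u'(1)] unfolding Nb_def by simp
      then show "u \<in> f ` Nb w" using u' unfolding Nb_def by blast
    qed
  qed
  moreover have "inj_on f (Nb w)" by (rule inj_on_subset[OF inj]) (auto simp: Nb_def)
  ultimately have cN: "card (Nb (f w)) = card (Nb w)" by (metis card_image)
  have "In R2 (f w) = f ` In R1 w"
  proof
    show "f ` In R1 w \<subseteq> In R2 (f w)"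
    proof
      fix u assume "u \<in> f ` In R1 w"
      then obtain u' where u': "u' \<in> V" "(u',w)\<in>R1" "u = f u'" unfolding In_def by blast
      then show "u \<in> In R2 (f w)" using pres[OF u'(1) w(1)] fV[OF u'(1)] unfolding In_def by simp
    qed
    show "In R2 (f w) \<subseteq> f ` In R1 w"
    proof
      fix u assume u: "u \<in> In R2 (f w)"
      then have uV: "u \<in> V" unfolding In_def by simp
      then obtain u' where u': "u' \<in> V" "u = f u'" using sur by (metis imageE)
      then have "(u',w)\<in>R1" using u pres[OF u'(1) w(1)] unfolding In_def by simp
      then show "u \<in> f ` In R1 w" using u' unfolding In_def by blast
    qed
  qed
  moreover have "inj_on f (In R1 w)" by (rule inj_on_subset[OF inj]) (auto simp: In_def)
  ultimately have c1: "card (In R2 (f w)) = card (In R1 w)" by (metis card_image)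
  have dc: "even (rho (f w)) \<and> Nb (f w) = Nb w" using deg_class[OF w fwV cN] .
  have "In R2 (f w) = In R2 w" using In_zero[OF R2 w(1,2)] In_zero[OF R2 fwV] dc by simp
  then show ?thesis using c1 by simp
qed

lemma In_lvl: assumes R: "TO R" and w: "w \<in> V" "rho w = 2*j"
  shows "In R w = {u\<in>V. odd (rho u) \<and> 2*j < rho u \<and> (u,st)\<in>R}"
  using In_zero[OF R w(1)] Nb_zero[OF w(1)] w by auto

lemma oddh: "odd (x::nat) \<Longrightarrow> (2*j < x \<and> \<not> 2*(j+1) < x) \<longleftrightarrow> x = 2*j+1" by presburger

lemma Inv_iso:
  assumes R1: "TO R1" and R2: "TO R2" and iso: "digraph_iso V R1 R2"
  shows "Inv R1 = Inv R2"
proof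
  fix j show "Inv R1 j = Inv R2 j"
  proof (cases "j \<in> {1..l}")
    case False
    have "Inv R j = undefined" for R using False unfolding Inv_def by (simp del: atLeastAtMost_iff)
    then show ?thesis by simp
  next
    case True
    obtain w where w: "w \<in> V" "rho w = 2*j" using zex True by auto
    have w': "even (rho w)" "rho w \<ge> 2" using w True by auto
    have ci: "card (In R1 w) = card (In R2 w)" using iso_In[OF R1 R2 iso w(1) w'] .
    have fin: "finite (In R v)" for R :: "(nat \<times> nat) set" and v using finV unfolding In_def by auto
    show ?thesis
    proof (cases "j = l")
      case jl: True
      have "{c\<in>V. rho c = 2*j+1 \<and> (c,st)\<in>R} = In R w" if "TO R" for R
        using In_lvl[OF that w] rho_le jl by fastforce
      then have e1: "{c\<in>V. rho c = 2*j+1 \<and> (c,st)\<in>R1} = In R1 w"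
        and e2: "{c\<in>V. rho c = 2*j+1 \<and> (c,st)\<in>R2} = In R2 w" using R1 R2 by blast+
      show ?thesis using True ci unfolding Inv_def e1 e2 by simp
    next
      case False
      then obtain w2 where w2: "w2 \<in> V" "rho w2 = 2*(j+1)" using zex[of "j+1"] True by auto
      have w2': "even (rho w2)" "rho w2 \<ge> 2" using w2 by auto
      have ci2: "card (In R1 w2) = card (In R2 w2)" using iso_In[OF R1 R2 iso w2(1) w2'] .
      have eq: "{c\<in>V. rho c = 2*j+1 \<and> (c,st)\<in>R} = In R w - In R w2" if "TO R" for R
        using In_lvl[OF that w] In_lvl[OF that w2] oddh by auto
      have sub: "In R w2 \<subseteq> In R w" if "TO R" for R
        using In_lvl[OF that w] In_lvl[OF that w2] by auto
      show ?thesis using True eq[OF R1] eq[OF R2] card_Diff_subset[OF fin sub[OF R1]]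
          card_Diff_subset[OF fin sub[OF R2]] ci ci2 unfolding Inv_def by simp
    qed
  qed
qed

end


context tg begin

lemma E_CW: assumes c: "c \<in> Cs" and w: "w \<in> V" "w \<notin> Cs" shows "E c w \<longleftrightarrow> lvl w \<le> lvl c"
proof -
  note ow = outside_C[OF w]
  have cV: "c \<in> V" using c Cs_def by auto
  have lst: "lvl st = 0" using rho_st lvl_def by simp
  show ?thesis using E_def ow in_C[OF c] cV w rho_st lst
    by (auto simp: max_def split: if_splits)
qed

lemma E_WW: "w \<in> V \<Longrightarrow> w \<notin> Cs \<Longrightarrow> w' \<in> V \<Longrightarrow> w' \<notin> Cs \<Longrightarrow> \<not> E w w'"
  using outside_C E_def by (auto simp: max_def)

lemma construct:
  assumes b: "b \<in> (\<Pi>\<^sub>E j\<in>{1..l}. {0..card {v\<in>V. rho v = 2*j+1}})"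
  shows "\<exists>R. TO R \<and> Inv R = b"
proof -
  have "\<forall>j\<in>{1..l}. \<exists>S. S \<subseteq> {v\<in>V. rho v = 2*j+1} \<and> card S = b j"
  proof
    fix j assume j: "j \<in> {1..l}"
    then have "b j \<le> card {v\<in>V. rho v = 2*j+1}" using b by auto
    then obtain T where "T \<subseteq> {v\<in>V. rho v = 2*j+1}" "card T = b j" by (rule obtain_subset_with_card_n)
    then show "\<exists>S. S \<subseteq> {v\<in>V. rho v = 2*j+1} \<and> card S = b j" by blast
  qed
  then obtain Sf where Sf: "\<And>j. j\<in>{1..l} \<Longrightarrow> Sf j \<subseteq> {v\<in>V. rho v = 2*j+1} \<and> card (Sf j) = b j"
    by metis
  define Bs where "Bs = (\<Union>j\<in>{1..l}. Sf j)"
  have Bsp: "c \<in> V \<and> rho c = 2 * lvl c + 1 \<and> lvl c \<ge> 1 \<and> c \<in> Cs" if cB: "c \<in> Bs" for c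
  proof -
    obtain j where j: "j \<in> {1..l}" "c \<in> Sf j" using cB Bs_def by auto
    then have "c \<in> V" "rho c = 2*j+1" using Sf by auto
    then show ?thesis unfolding lvl_def Cs_def using j by auto
  qed
  define k0 where "k0 c = (if c \<in> Bs then - int (lvl c) else int (lvl c))" for c
  have k0neg: "k0 c < 0 \<Longrightarrow> c \<in> Bs" for c unfolding k0_def by (auto split: if_splits)
  have lst: "lvl st = 0" using rho_st lvl_def by simp
  have stB: "st \<notin> Bs" using Bsp lst by fastforce
  have k0st: "k0 st = 0" using stB lst k0_def by simp
  have lw: "int (lvl w) \<ge> 1" if "w \<in> V" "w \<notin> Cs" for w using outside_C[OF that] by simp
  define R where "R = {(x,y). (x\<in>Cs \<and> y\<in>Cs \<and> (k0 x < k0 y \<or> k0 x = k0 y \<and> x < y))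
     \<or> (x\<in>Cs \<and> y\<in>V \<and> y\<notin>Cs \<and> k0 x \<le> - int (lvl y))
     \<or> (x\<in>V \<and> x\<notin>Cs \<and> y\<in>Cs \<and> int (lvl x) \<le> k0 y)}"
  have R_iff: "(a,c)\<in>R \<longleftrightarrow> ((a\<in>Cs \<and> c\<in>Cs \<and> (k0 a < k0 c \<or> k0 a = k0 c \<and> a < c))
     \<or> (a\<in>Cs \<and> c\<in>V \<and> c\<notin>Cs \<and> k0 a \<le> - int (lvl c))
     \<or> (a\<in>V \<and> a\<notin>Cs \<and> c\<in>Cs \<and> int (lvl a) \<le> k0 c))" for a c unfolding R_def by simp
  have CV: "c \<in> Cs \<Longrightarrow> c \<in> V" for c using Cs_def by auto
  have p1: "x \<in> V \<and> y \<in> V \<and> E x y" if xy: "(x,y)\<in>R" for x y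
  proof -
    consider (CC) "x\<in>Cs" "y\<in>Cs" "k0 x < k0 y \<or> k0 x = k0 y \<and> x < y"
      | (CW) "x\<in>Cs" "y\<in>V" "y\<notin>Cs" "k0 x \<le> - int (lvl y)"
      | (WC) "x\<in>V" "x\<notin>Cs" "y\<in>Cs" "int (lvl x) \<le> k0 y" using xy R_def by blast
    then show ?thesis
    proof cases
      case CC
      then have "x \<noteq> y" by auto
      then show ?thesis using C_E CC CV by blast
    next
      case CW
      then have "k0 x < 0" using lw[of y] by simp
      then have "x \<in> Bs" using k0neg by blast
      then have "lvl y \<le> lvl x" using CW k0_def by simp
      then show ?thesis using E_CW[OF CW(1) CW(2,3)] CW CV by blast
    next
      case WC
      then have "k0 y > 0" using lw[of x] by simp
      then have "y \<notin> Bs" using k0_def by (auto split: if_splits)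
      then have "lvl x \<le> lvl y" using WC k0_def by simp
      then show ?thesis using E_CW[OF WC(3) WC(1,2)] WC CV E_sym by blast
    qed
  qed
  have p2: "(x,y)\<in>R \<longleftrightarrow> (y,x)\<notin>R" if x: "x \<in> V" and y: "y \<in> V" and e: "E x y" for x y
  proof -
    have xy: "x \<noteq> y" using e E_def by auto
    consider (CC) "x\<in>Cs" "y\<in>Cs" | (CW) "x\<in>Cs" "y\<notin>Cs" | (WC) "x\<notin>Cs" "y\<in>Cs"
      | (WW) "x\<notin>Cs" "y\<notin>Cs" by blast
    then show ?thesis
    proof cases
      case CC
      have a: "(x,y)\<in>R \<longleftrightarrow> (k0 x < k0 y \<or> k0 x = k0 y \<and> x < y)" using CC unfolding R_iff by blast
      have b: "(y,x)\<in>R \<longleftrightarrow> (k0 y < k0 x \<or> k0 y = k0 x \<and> y < x)" using CC unfolding R_iff by blast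
      show ?thesis unfolding a b using xy by linarith
    next
      case CW
      have a: "(x,y)\<in>R \<longleftrightarrow> k0 x \<le> - int (lvl y)" using CW y unfolding R_iff by blast
      have b: "(y,x)\<in>R \<longleftrightarrow> int (lvl y) \<le> k0 x" using CW y unfolding R_iff by blast
      have le: "lvl y \<le> lvl x" using E_CW[OF CW(1) y CW(2)] e by simp
      have l1: "int (lvl y) \<ge> 1" using lw[OF y CW(2)] .
      show ?thesis unfolding a b
      proof (cases "x \<in> Bs")
        case True then have "k0 x = - int (lvl x)" using k0_def by simp
        then show "(k0 x \<le> - int (lvl y)) = (\<not> int (lvl y) \<le> k0 x)" using le l1 by linarith
      next
        case False then have "k0 x = int (lvl x)" using k0_def by simp
        then show "(k0 x \<le> - int (lvl y)) = (\<not> int (lvl y) \<le> k0 x)" using le l1 by linarith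
      qed
    next
      case WC
      have a: "(y,x)\<in>R \<longleftrightarrow> k0 y \<le> - int (lvl x)" using WC x unfolding R_iff by blast
      have b: "(x,y)\<in>R \<longleftrightarrow> int (lvl x) \<le> k0 y" using WC x unfolding R_iff by blast
      have le: "lvl x \<le> lvl y" using E_CW[OF WC(2) x WC(1)] e E_sym by blast
      have l1: "int (lvl x) \<ge> 1" using lw[OF x WC(1)] .
      show ?thesis unfolding a b
      proof (cases "y \<in> Bs")
        case True then have "k0 y = - int (lvl y)" using k0_def by simp
        then show "(int (lvl x) \<le> k0 y) = (\<not> k0 y \<le> - int (lvl x))" using le l1 by linarith
      next
        case False then have "k0 y = int (lvl y)" using k0_def by simp
        then show "(int (lvl x) \<le> k0 y) = (\<not> k0 y \<le> - int (lvl x))" using le l1 by linarith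
      qed
    next
      case WW then show ?thesis using E_WW x y e by blast
    qed
  qed
  have p3: "trans R"
  proof (rule transI)
    fix x y z assume xy: "(x,y)\<in>R" and yz: "(y,z)\<in>R"
    have xV: "x \<in> V" and yV: "y \<in> V" and zV: "z \<in> V" using p1[OF xy] p1[OF yz] by auto
    show "(x,z)\<in>R"
    proof (cases "y \<in> Cs")
      case True
      have A: "(x\<in>Cs \<and> (k0 x < k0 y \<or> k0 x = k0 y \<and> x < y)) \<or> (x\<notin>Cs \<and> int (lvl x) \<le> k0 y)"
        using xy True unfolding R_iff by blast
      have B: "(z\<in>Cs \<and> (k0 y < k0 z \<or> k0 y = k0 z \<and> y < z)) \<or> (z\<notin>Cs \<and> k0 y \<le> - int (lvl z))"
        using yz True unfolding R_iff by blast
      from A show ?thesis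
      proof
        assume a: "x\<in>Cs \<and> (k0 x < k0 y \<or> k0 x = k0 y \<and> x < y)"
        from B show ?thesis
        proof
          assume b: "z\<in>Cs \<and> (k0 y < k0 z \<or> k0 y = k0 z \<and> y < z)"
          then have "k0 x < k0 z \<or> k0 x = k0 z \<and> x < z" using a by auto
          then show ?thesis using a b unfolding R_iff by blast
        next
          assume b: "z\<notin>Cs \<and> k0 y \<le> - int (lvl z)"
          then have "k0 x \<le> - int (lvl z)" using a by auto
          then show ?thesis using a b zV unfolding R_iff by blast
        qed
      next
        assume a: "x\<notin>Cs \<and> int (lvl x) \<le> k0 y"
        from B show ?thesis
        proof
          assume b: "z\<in>Cs \<and> (k0 y < k0 z \<or> k0 y = k0 z \<and> y < z)"
          then have "int (lvl x) \<le> k0 z" using a by auto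
          then show ?thesis using a b xV unfolding R_iff by blast
        next
          assume b: "z\<notin>Cs \<and> k0 y \<le> - int (lvl z)"
          have "int (lvl x) \<ge> 1" "int (lvl z) \<ge> 1" using lw xV zV a b by auto
          then show ?thesis using a b by linarith
        qed
      qed
    next
      case False
      have a: "x \<in> Cs \<and> k0 x \<le> - int (lvl y)" using xy False unfolding R_iff by blast
      have b: "z \<in> Cs \<and> int (lvl y) \<le> k0 z" using yz False unfolding R_iff by blast
      have "int (lvl y) \<ge> 1" using lw yV False by auto
      then have "k0 x < k0 z" using a b by linarith
      then show ?thesis using a b unfolding R_iff by blast
    qed
  qed
  have TO: "TO R" unfolding TO_def transitive_orientation_def
  proof (intro conjI)
    show "\<forall>(x,y)\<in>R. x \<in> V \<and> y \<in> V \<and> E x y" using p1 by blast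
    show "\<forall>x\<in>V. \<forall>y\<in>V. E x y \<longrightarrow> ((x,y)\<in>R \<longleftrightarrow> (y,x)\<notin>R)" using p2 by blast
    show "trans R" by (rule p3)
  qed
  have "Inv R j = b j" for j
  proof (cases "j \<in> {1..l}")
    case False
    have "Inv R j = undefined" using False unfolding Inv_def by (simp del: atLeastAtMost_iff)
    moreover have "b j = undefined" using PiE_arb[OF b False] .
    ultimately show ?thesis by simp
  next
    case True
    have "{c\<in>V. rho c = 2*j+1 \<and> (c,st)\<in>R} = Sf j"
    proof (rule set_eqI)
      fix c
      show "c \<in> {c\<in>V. rho c = 2*j+1 \<and> (c,st)\<in>R} \<longleftrightarrow> c \<in> Sf j"
      proof
        assume c: "c \<in> {c\<in>V. rho c = 2*j+1 \<and> (c,st)\<in>R}"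
        then have cV: "c \<in> V" and rc: "rho c = 2*j+1" and cs: "(c,st)\<in>R" by auto
        have cC: "c \<in> Cs" using cV rc unfolding Cs_def by simp
        have lc: "lvl c = j" using rc unfolding lvl_def by simp
        have stC: "st \<in> Cs" using stV Cs_def by auto
        have "c \<noteq> st" using c rho_st by auto
        have "k0 c < k0 st \<or> k0 c = k0 st \<and> c < st" using cs cC stC unfolding R_iff by blast
        then have "k0 c < 0 \<or> k0 c = 0" using k0st by auto
        moreover have "k0 c \<noteq> 0" using lc True k0_def by auto
        ultimately have "c \<in> Bs" using k0neg by auto
        then obtain i where i: "i \<in> {1..l}" "c \<in> Sf i" using Bs_def by auto
        then have "rho c = 2*i+1" using Sf by auto
        then show "c \<in> Sf j" using c i by auto
      next
        assume c: "c \<in> Sf j"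
        then have cV: "c \<in> V" and rc: "rho c = 2*j+1" using Sf True by auto
        have cB: "c \<in> Bs" using c True Bs_def by auto
        have "k0 c < 0" using cB Bsp[OF cB] k0_def by simp
        moreover have "c \<in> Cs" "st \<in> Cs" using Bsp[OF cB] stV Cs_def by auto
        ultimately have "(c,st)\<in>R" using k0st unfolding R_iff by auto
        then show "c \<in> {c\<in>V. rho c = 2*j+1 \<and> (c,st)\<in>R}" using cV rc by auto
      qed
    qed
    moreover have "Inv R j = card {c\<in>V. rho c = 2*j+1 \<and> (c,st)\<in>R}" using True unfolding Inv_def by simp
    ultimately show ?thesis using Sf[OF True] by simp
  qed
  then show ?thesis using TO by blast
qed

end


context tg begin

lemma Inv_range: assumes R: "TO R" shows "Inv R \<in> (\<Pi>\<^sub>E j\<in>{1..l}. {0..card {v\<in>V. rho v = 2*j+1}})"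
proof (rule PiE_I)
  fix j assume j: "j \<in> {1..l}"
  have "Inv R j = card {c\<in>V. rho c = 2*j+1 \<and> (c,st)\<in>R}" using j unfolding Inv_def by simp
  also have "\<dots> \<le> card {v\<in>V. rho v = 2*j+1}" by (rule card_mono) (use finV in auto)
  finally show "Inv R j \<in> {0..card {v\<in>V. rho v = 2*j+1}}" by simp
next
  fix j assume "j \<notin> {1..l}"
  then show "Inv R j = undefined" unfolding Inv_def by (simp del: atLeastAtMost_iff)
qed

lemma count_main: "num_noniso_TO V E = (\<Prod>j\<in>{1..l}. card {v\<in>V. rho v = 2*j+1} + 1)"
proof -
  define T where "T = trans_orients V E"
  define rel where "rel = {(R1,R2). R1\<in>T \<and> R2\<in>T \<and> digraph_iso V R1 R2}"
  have T: "R \<in> T \<longleftrightarrow> TO R" for R unfolding T_def trans_orients_def TO_def by simp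
  have rel_img: "rel `` {R} = {R'\<in>T. Inv R' = Inv R}" if R: "R \<in> T" for R
  proof -
    have "digraph_iso V R R' \<longleftrightarrow> Inv R' = Inv R" if R': "R' \<in> T" for R'
    proof
      assume "digraph_iso V R R'" then show "Inv R' = Inv R" using Inv_iso R R' T by metis
    next
      assume "Inv R' = Inv R"
      then show "digraph_iso V R R'" using iso_from_K[of R R'] K_eq[of R R'] R R' T by metis
    qed
    then show ?thesis unfolding rel_def using R by auto
  qed
  define g where "g y = {R'\<in>T. Inv R' = y}" for y
  have q: "T // rel = g ` (Inv ` T)"
    unfolding quotient_def g_def using rel_img by auto
  have inj: "inj_on g (Inv ` T)"
  proof (rule inj_onI)
    fix y y' assume y: "y \<in> Inv ` T" and y': "y' \<in> Inv ` T" and e: "g y = g y'"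
    obtain R where "R \<in> T" "Inv R = y" using y by auto
    then have "R \<in> g y" unfolding g_def by auto
    then have "R \<in> g y'" using e by simp
    then show "y = y'" using \<open>Inv R = y\<close> unfolding g_def by auto
  qed
  have img: "Inv ` T = (\<Pi>\<^sub>E j\<in>{1..l}. {0..card {v\<in>V. rho v = 2*j+1}})"
  proof
    show "Inv ` T \<subseteq> (\<Pi>\<^sub>E j\<in>{1..l}. {0..card {v\<in>V. rho v = 2*j+1}})" using Inv_range T by auto
    show "(\<Pi>\<^sub>E j\<in>{1..l}. {0..card {v\<in>V. rho v = 2*j+1}}) \<subseteq> Inv ` T"
    proof
      fix b assume "b \<in> (\<Pi>\<^sub>E j\<in>{1..l}. {0..card {v\<in>V. rho v = 2*j+1}})"
      then obtain R where "TO R" "Inv R = b" using construct by blast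
      then show "b \<in> Inv ` T" using T by blast
    qed
  qed
  have "num_noniso_TO V E = card (T // rel)" unfolding num_noniso_TO_def T_def rel_def by simp
  also have "\<dots> = card (Inv ` T)" unfolding q using card_image[OF inj] .
  also have "\<dots> = (\<Prod>j\<in>{1..l}. card {0..card {v\<in>V. rho v = 2*j+1}})" unfolding img by (simp add: card_PiE)
  also have "\<dots> = (\<Prod>j\<in>{1..l}. card {v\<in>V. rho v = 2*j+1} + 1)" by simp
  finally show ?thesis .
qed

end



lemma card_nth_eq: "card {k. k < length xs \<and> xs!k = x} = count_list xs x"
proof (induction xs)
  case Nil show ?case by simp
next
  case (Cons a xs)
  have eq: "{k. k < length (a#xs) \<and> (a#xs)!k = x} = (if a = x then {0} else {}) \<union> Suc ` {k. k < length xs \<and> xs!k = x}"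
  proof (rule set_eqI)
    fix k show "k \<in> {k. k < length (a#xs) \<and> (a#xs)!k = x} \<longleftrightarrow> k \<in> (if a = x then {0} else {}) \<union> Suc ` {k. k < length xs \<and> xs!k = x}"
      by (cases k) auto
  qed
  have fin: "finite {k. k < length xs \<and> xs!k = x}" by simp
  have "0 \<notin> Suc ` {k. k < length xs \<and> xs!k = x}" by auto
  then show ?case unfolding eq using Cons card_image[of Suc] fin by (auto simp: card_insert_if)
qed

lemma count_replicate: "count_list (replicate n a) x = (if a = x then n else 0)"
  by (induction n) auto

fun rl :: "nat \<Rightarrow> (nat \<Rightarrow> nat) \<Rightarrow> (nat \<Rightarrow> nat) \<Rightarrow> nat list" where
  "rl 0 p z = replicate (p 0) 1"
| "rl (Suc i) p z = replicate (p (Suc i)) (2*i+3) @ replicate (z (Suc i)) (2*i+2) @ rl i p z"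

lemma rl_len: "length (rl i p z) = length (blocks i p z)"
  by (induction i) auto

lemma rl_set: "x \<in> set (rl i p z) \<Longrightarrow> 1 \<le> x \<and> x \<le> 2*i+1"
  by (induction i) (auto split: if_splits)

lemma rl_nth: "k < length (rl i p z) \<Longrightarrow> blocks i p z ! k = odd (rl i p z ! k)"
proof (induction i arbitrary: k)
  case 0 then show ?case by simp
next
  case (Suc i)
  show ?case using Suc rl_len[of i p z]
    by (auto simp: nth_append)
qed

lemma sw_rep: "sorted_wrt (\<lambda>a b. b \<le> (a::nat)) (replicate n x)"
  by (induction n) auto

lemma rl_sorted: "sorted_wrt (\<lambda>a b. b \<le> a) (rl i p z)"
proof (induction i)
  case 0 then show ?case by (simp add: sw_rep)
next
  case (Suc i)
  have "\<forall>x\<in>set (rl i p z). x \<le> 2*i+1" using rl_set by auto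
  then show ?case using Suc by (auto simp: sorted_wrt_append sw_rep)
qed

lemma rl_count: "j \<le> i \<Longrightarrow> count_list (rl i p z) (2*j+1) = p j"
proof (induction i)
  case 0 then show ?case by (simp add: count_replicate)
next
  case (Suc i)
  show ?case
  proof (cases "j = Suc i")
    case True
    have "2*j+1 \<notin> set (rl i p z)" using rl_set True by fastforce
    then show ?thesis using True by (simp add: count_replicate)
  next
    case False then show ?thesis using Suc by (simp add: count_replicate)
  qed
qed

lemma rl_zero: "\<forall>j\<in>{1..i}. z j > 0 \<Longrightarrow> j \<in> {1..i} \<Longrightarrow> 2*j \<in> set (rl i p z)"
proof (induction i)
  case 0 then show ?case by simp
next
  case (Suc i)
  show ?case
  proof (cases "j = Suc i")
    case True then show ?thesis using Suc.prems by auto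
  next
    case False then show ?thesis using Suc by auto
  qed
qed




theorem theorem3p4:
  fixes l :: nat and p z :: "nat \<Rightarrow> nat"
  assumes "\<forall>i\<in>{1..l}. z i > 0"
  shows "num_noniso_TO (thr_vertices (blocks l p z)) (thr_adj (blocks l p z))
           = (\<Prod>i=1..l. p i + 1)"
proof -
  define s where "s = blocks l p z"
  define L where "L = length s"
  define xs where "xs = rl l p z"
  have lenx: "length xs = L" unfolding xs_def L_def s_def by (simp add: rl_len)
  define rho where "rho k = (if k < L then xs ! k else 0)" for k
  have V: "thr_vertices s = {..<Suc L}" unfolding thr_vertices_def L_def by simp
  have xs_set: "k < L \<Longrightarrow> 1 \<le> xs ! k \<and> xs ! k \<le> 2*l+1" for k
    using rl_set[of "xs!k" l p z] lenx unfolding xs_def by (metis nth_mem)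
  have snth: "k < L \<Longrightarrow> s ! k = odd (xs ! k)" for k
    using rl_nth[of k l p z] lenx unfolding xs_def s_def by simp
  have mono: "i < j \<Longrightarrow> j < L \<Longrightarrow> xs ! j \<le> xs ! i" for i j
    using sorted_wrt_nth_less[OF rl_sorted[of l p z]] lenx unfolding xs_def by auto
  have key: "s ! a \<longleftrightarrow> odd (max (rho a) (rho b))" if ab: "a < b" "b \<le> L" for a b
  proof -
    have aL: "a < L" using ab by simp
    have "rho b \<le> rho a" using mono[of a b] ab aL unfolding rho_def by auto
    then have "max (rho a) (rho b) = xs ! a" using aL unfolding rho_def by simp
    then show ?thesis using snth[OF aL] by simp
  qed
  have Edef: "thr_adj s a b \<longleftrightarrow> a \<noteq> b \<and> a \<in> thr_vertices s \<and> b \<in> thr_vertices s \<and> odd (max (rho a) (rho b))" for a b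
  proof (cases "a < b")
    case True then show ?thesis unfolding thr_adj_def V using key[of a b] by auto
  next
    case False
    show ?thesis
    proof (cases "a = b")
      case True then show ?thesis unfolding thr_adj_def by simp
    next
      case ne: False
      then have "b < a" using False by simp
      then show ?thesis unfolding thr_adj_def V using key[of b a] by (auto simp: max.commute)
    qed
  qed
  interpret tg "thr_vertices s" rho L l "thr_adj s"
  proof
    show "finite (thr_vertices s)" unfolding V by simp
    show "L \<in> thr_vertices s" unfolding V by simp
    show "rho L = 0" unfolding rho_def by simp
    show "v = L" if "v \<in> thr_vertices s" "rho v = 0" for v
      using that xs_set[of v] unfolding V rho_def by (auto split: if_splits)
    show "rho v \<le> 2*l+1" if "v \<in> thr_vertices s" for v
      using xs_set[of v] unfolding rho_def by auto
    show "\<exists>zz\<in>thr_vertices s. rho zz = 2*j" if "1 \<le> j" "j \<le> l" for j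
    proof -
      have "2*j \<in> set xs" using rl_zero[OF assms, of j p] that unfolding xs_def by auto
      then obtain k where "k < L" "xs ! k = 2*j" using lenx by (metis in_set_conv_nth)
      then show ?thesis unfolding V rho_def by auto
    qed
    show "thr_adj s a b \<longleftrightarrow> a \<noteq> b \<and> a \<in> thr_vertices s \<and> b \<in> thr_vertices s \<and> odd (max (rho a) (rho b))" for a b
      by (rule Edef)
  qed
  have cards: "card {v\<in>thr_vertices s. rho v = 2*j+1} = p j" if j: "j \<in> {1..l}" for j
  proof -
    have "{v\<in>thr_vertices s. rho v = 2*j+1} = {k. k < length xs \<and> xs!k = 2*j+1}"
      unfolding V rho_def using lenx by (auto split: if_splits)
    then show ?thesis using card_nth_eq[of xs "2*j+1"] rl_count[of j l p z] j unfolding xs_def by simp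
  qed
  have "num_noniso_TO (thr_vertices s) (thr_adj s) = (\<Prod>j\<in>{1..l}. card {v\<in>thr_vertices s. rho v = 2*j+1} + 1)"
    by (rule count_main)
  also have "\<dots> = (\<Prod>i=1..l. p i + 1)" using cards by (intro prod.cong) auto
  finally show ?thesis unfolding s_def .
qed


end
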